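(* Let $K\ge 2$, let $\mathcal{C}_1,\dots,\mathcal{C}_K$ be a partition of $\mathcal{V}=\{v_1,\dots,v_N\}$ into sets of size $N/K$, and let $\mathcal{R}$ satisfy Assumption 1. Then the all-ones vector $\mathbf{1}\in\mathbb{R}^N$ is an eigenvector of $\mathbf{R}$ with eigenvalue $d$. For $k\in[K-1]$ define $\mathbf{u}_k\in\mathbb{R}^N$ by $u_{ki}=1$ if $v_i\in\mathcal{C}_k$ and $u_{ki}=-\frac1{K-1}$ otherwise. Then $\mathbf{1},\mathbf{u}_1,\dots,\mathbf{u}_{K-1}$ lie in the null space of $\mathbf{R}\left(\mathbf{I}-\frac1N\mathbf{1}\mathbf{1}^\intercal\right)$ and are linearly independent.
   Context: $\mathcal{R}$ is an undirected graph on $\mathcal{V}$ with symmetric adjacency $\mathbf{R}\in\{0,1\}^{N\times N}$. Assumption 1: $\mathcal{R}$ is $d$-regular for some $K\le d\le N$, $R_{ii}=1$ for all $i$ (self-loops counted in the degree), and each node is adjacent in $\mathcal{R}$ to exactly $d/K$ nodes of $\mathcal{C}_k$ for every $k\in[K]$ (including the self-loop). *)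

theory Defs
  imports "HOL-Analysis.Analysis"
begin

text \<open>Nodes are the elements of a finite type 'n, so N = CARD('n).
  Clusters are indexed by k in {1..K}.\<close>

definition ones_vec :: "real ^ 'n" where
  "ones_vec = (\<chi> i. 1)"

definition centering :: "real ^ 'n ^ 'n" where
  "centering = mat 1 - (1 / real CARD('n)) *\<^sub>R (\<chi> i j. 1)"

definition u_vec :: "(nat \<Rightarrow> 'n set) \<Rightarrow> nat \<Rightarrow> nat \<Rightarrow> real ^ 'n" where
  "u_vec C K k = (\<chi> i. if i \<in> C k then 1 else - 1 / (real K - 1))"

end

theory Submission
  imports Defs
begin

lemma cent_apply: "centering *v (x::real^'n) = x - ((\<Sum>j\<in>UNIV. x $ j) / real CARD('n)) *\<^sub>R ones_vec"
proof -
  have "centering = mat 1 - (1 / real CARD('n)) *\<^sub>R ((\<chi> i j. 1)::real^'n^'n)" by (simp add: centering_def)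
  then have "centering *v x = mat 1 *v x - (1 / real CARD('n)) *\<^sub>R (((\<chi> i j. 1)::real^'n^'n) *v x)"
    unfolding centering_def by (simp add: matrix_vector_mult_diff_rdistrib scaleR_matrix_vector_assoc)
  moreover have "((\<chi> i j. 1)::real^'n^'n) *v x = (\<Sum>j\<in>UNIV. x $ j) *\<^sub>R ones_vec"
    by (simp add: vec_eq_iff matrix_vector_mult_def ones_vec_def)
  ultimately show ?thesis by simp
qed

lemma sum_split_compl: "(\<Sum>j\<in>UNIV. f j) = (\<Sum>j\<in>A. f j) + (\<Sum>j\<in>- A. (f j::real))" for A :: "'n::finite set"
proof -
  have "(\<Sum>j\<in>A \<union> - A. f j) = (\<Sum>j\<in>A. f j) + (\<Sum>j\<in>- A. f j)"
    by (rule sum.union_disjoint) auto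
  then show ?thesis by simp
qed

theorem lemma3:
  fixes R :: "real ^ 'n ^ 'n"
    and C :: "nat \<Rightarrow> 'n set"
    and K d :: nat
  assumes K2: "K \<ge> 2"
    and part_cover: "(\<Union>k\<in>{1..K}. C k) = UNIV"
    and part_disj: "\<forall>k\<in>{1..K}. \<forall>l\<in>{1..K}. k \<noteq> l \<longrightarrow> C k \<inter> C l = {}"
    and part_size: "\<forall>k\<in>{1..K}. real (card (C k)) = real CARD('n) / real K"
    and R01: "\<forall>i j. R $ i $ j = 0 \<or> R $ i $ j = 1"
    and Rsym: "transpose R = R"
    and dbounds: "K \<le> d" "d \<le> CARD('n)"
    and Rdiag: "\<forall>i. R $ i $ i = 1"
    and Rreg: "\<forall>i. (\<Sum>j\<in>UNIV. R $ i $ j) = real d"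
    and Rclust: "\<forall>i. \<forall>k\<in>{1..K}. real (card {j \<in> C k. R $ i $ j = 1}) = real d / real K"
  shows "R *v ones_vec = real d *\<^sub>R ones_vec
    \<and> (R ** centering) *v ones_vec = 0
    \<and> (\<forall>k\<in>{1..<K}. (R ** centering) *v u_vec C K k = 0)
    \<and> independent (insert ones_vec (u_vec C K ` {1..<K}))
    \<and> card (insert ones_vec (u_vec C K ` {1..<K})) = K"
proof -
  define N where "N = real CARD('n)"
  have Npos: "N > 0" unfolding N_def by simp
  have Kpos: "real K > 1" using K2 by simp
  have ne: "C k \<noteq> {}" if "k \<in> {1..K}" for k
  proof
    assume "C k = {}"
    moreover have "real (card (C k)) = real CARD('n) / real K" using part_size that by blast
    ultimately have "real CARD('n) / real K = 0" by simp
    then show False using Kpos by simp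
  qed
  have uval: "u_vec C K k $ i = (if k = l then 1 else - 1 / (real K - 1))"
    if "k \<in> {1..K}" "l \<in> {1..K}" "i \<in> C l" for k l i
  proof (cases "k = l")
    case False
    then have "i \<notin> C k" using part_disj that by blast
    then show ?thesis using False unfolding u_vec_def by simp
  qed (use that in \<open>simp add: u_vec_def\<close>)
  have R1: "R *v ones_vec = real d *\<^sub>R ones_vec"
    using Rreg by (simp add: vec_eq_iff matrix_vector_mult_def ones_vec_def)
  have c1: "centering *v ones_vec = (0::real^'n)"
    by (simp add: cent_apply ones_vec_def vec_eq_iff)
  have sumu: "(\<Sum>j\<in>UNIV. u_vec C K k $ j) = 0" if k: "k \<in> {1..K}" for k
  proof -
    have ck: "real (card (- C k)) = N - real (card (C k))"
      unfolding N_def using card_Diff_subset[of "C k" UNIV] by (simp add: Compl_eq_Diff_UNIV of_nat_diff card_mono)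
    have "(\<Sum>j\<in>UNIV. u_vec C K k $ j) = (\<Sum>j\<in>C k. u_vec C K k $ j) + (\<Sum>j\<in>- C k. u_vec C K k $ j)"
      by (rule sum_split_compl)
    also have "\<dots> = real (card (C k)) - real (card (- C k)) / (real K - 1)"
      by (simp add: u_vec_def)
    also have "\<dots> = 0" using ck part_size k Kpos unfolding N_def
      by (simp add: field_simps)
    finally show ?thesis .
  qed
  have Ru: "R *v u_vec C K k = 0" if k: "k \<in> {1..K}" for k
  proof (rule iffD2[OF vec_eq_iff], rule allI)
    fix i
    have sC: "(\<Sum>j\<in>C k. R $ i $ j) = real d / real K"
    proof -
      have "(\<Sum>j\<in>C k. R $ i $ j) = (\<Sum>j\<in>C k. if R $ i $ j = 1 then 1 else 0)"
        by (rule sum.cong) (use R01 in auto)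
      also have "\<dots> = real (card {j \<in> C k. R $ i $ j = 1})"
        by (simp add: sum.If_cases Int_def)
      finally show ?thesis using Rclust k by simp
    qed
    have "(\<Sum>j\<in>UNIV. R $ i $ j) = (\<Sum>j\<in>C k. R $ i $ j) + (\<Sum>j\<in>- C k. R $ i $ j)"
      by (rule sum_split_compl)
    then have sD: "(\<Sum>j\<in>- C k. R $ i $ j) = real d - real d / real K"
      using sC Rreg by simp
    have "(R *v u_vec C K k) $ i = (\<Sum>j\<in>UNIV. R $ i $ j * u_vec C K k $ j)"
      by (simp add: matrix_vector_mult_def)
    also have "\<dots> = (\<Sum>j\<in>C k. R $ i $ j * u_vec C K k $ j) + (\<Sum>j\<in>- C k. R $ i $ j * u_vec C K k $ j)"
      by (rule sum_split_compl)
    also have "\<dots> = (\<Sum>j\<in>C k. R $ i $ j) - (\<Sum>j\<in>- C k. R $ i $ j) / (real K - 1)"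
      by (simp add: u_vec_def sum_divide_distrib sum_negf)
    also have "\<dots> = real d / real K - (real d - real d / real K) / (real K - 1)"
      by (simp only: sC sD)
    also have "\<dots> = 0"
    proof -
      have "real K - 1 \<noteq> 0" "real K \<noteq> 0" using Kpos by auto
      then show ?thesis by (simp add: field_simps)
    qed
    finally show "(R *v u_vec C K k) $ i = 0 $ i" by simp
  qed
  have part3: "\<forall>k\<in>{1..<K}. (R ** centering) *v u_vec C K k = 0"
  proof
    fix k assume "k \<in> {1..<K}"
    then have k: "k \<in> {1..K}" by auto
    show "(R ** centering) *v u_vec C K k = 0"
      using Ru[OF k] sumu[OF k] by (simp add: matrix_vector_mul_assoc[symmetric] cent_apply)
  qed
  have memb: "\<exists>l\<in>{1..K}. i \<in> C l" for i
    using part_cover by blast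
  have inj: "inj_on (u_vec C K) {1..<K}"
  proof
    fix k k' assume kk: "k \<in> {1..<K}" "k' \<in> {1..<K}" "u_vec C K k = u_vec C K k'"
    obtain i where i: "i \<in> C k" using ne[of k] kk by auto
    have "u_vec C K k $ i = 1" using uval[of k k i] kk i by auto
    moreover have "u_vec C K k' $ i = (if k' = k then 1 else - 1 / (real K - 1))"
      using uval[of k' k i] kk i by auto
    ultimately have "(if k' = k then 1 else - 1 / (real K - 1)) = (1::real)" using kk(3) by simp
    moreover have "- 1 / (real K - 1) < 0" using Kpos by simp
    ultimately show "k = k'" by (cases "k' = k") auto
  qed
  obtain iK where iK: "iK \<in> C K" using ne[of K] K2 by auto
  have notin: "ones_vec \<notin> u_vec C K ` {1..<K}"
  proof
    assume "ones_vec \<in> u_vec C K ` {1..<K}"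
    then obtain k where k: "k \<in> {1..<K}" "ones_vec = u_vec C K k" by auto
    have "u_vec C K k $ iK = - 1 / (real K - 1)" using uval[of k K iK] k iK K2 by auto
    moreover have "- 1 / (real K - 1) < 0" using Kpos by simp
    ultimately show False using k by (simp add: ones_vec_def)
  qed
  have card: "card (insert ones_vec (u_vec C K ` {1..<K})) = K"
    using notin inj K2 by (simp add: card_image)
  have indep: "independent (insert ones_vec (u_vec C K ` {1..<K}))"
  proof -
    let ?S = "insert ones_vec (u_vec C K ` {1..<K})"
    have "\<not> dependent ?S"
    proof
      assume "dependent ?S"
      then obtain c where c: "\<exists>v\<in>?S. c v \<noteq> 0" "(\<Sum>v\<in>?S. c v *\<^sub>R v) = 0"
        by (auto simp: dependent_finite)
      have split: "(\<Sum>v\<in>?S. c v *\<^sub>R v) = c ones_vec *\<^sub>R ones_vec + (\<Sum>k\<in>{1..<K}. c (u_vec C K k) *\<^sub>R u_vec C K k)"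
        using notin inj by (simp add: sum.reindex)
      have eq: "c ones_vec + (\<Sum>k\<in>{1..<K}. c (u_vec C K k) * u_vec C K k $ i) = 0" for i
      proof -
        have "(c ones_vec *\<^sub>R ones_vec + (\<Sum>k\<in>{1..<K}. c (u_vec C K k) *\<^sub>R u_vec C K k)) $ i = 0"
          using c(2) split by simp
        then show ?thesis by (simp add: ones_vec_def sum_component)
      qed
      define S where "S = (\<Sum>k\<in>{1..<K}. c (u_vec C K k))"
      have ev: "c ones_vec + (if l < K then c (u_vec C K l) else 0) * (1 + 1 / (real K - 1))
                 - S / (real K - 1) = 0" if l: "l \<in> {1..K}" for l
      proof -
        obtain i where i: "i \<in> C l" using ne[OF l] by auto
        have "(\<Sum>k\<in>{1..<K}. c (u_vec C K k) * u_vec C K k $ i)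
            = (\<Sum>k\<in>{1..<K}. c (u_vec C K k) * (if k = l then 1 + 1 / (real K - 1) else 0) - c (u_vec C K k) / (real K - 1))"
          by (rule sum.cong) (use uval[OF _ l i] Kpos in \<open>auto simp: field_simps\<close>)
        also have "\<dots> = (if l < K then c (u_vec C K l) else 0) * (1 + 1 / (real K - 1)) - S / (real K - 1)"
        proof -
          let ?a = "1 + 1 / (real K - 1)"
          have d1: "(\<Sum>k\<in>{1..<K}. c (u_vec C K k) * (if k = l then ?a else 0))
              = (\<Sum>k\<in>{1..<K}. if k = l then c (u_vec C K l) * ?a else 0)"
            by (rule sum.cong) auto
          have d2: "(\<Sum>k\<in>{1..<K}. if k = l then c (u_vec C K l) * ?a else 0)
              = (if l < K then c (u_vec C K l) * ?a else 0)"
            using l by (simp add: sum.delta)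
          show ?thesis
            by (simp only: sum_subtractf sum_divide_distrib[symmetric] S_def d1 d2) simp
        qed
        finally show ?thesis using eq[of i] by simp
      qed
      have a: "c ones_vec - S / (real K - 1) = 0" using ev[of K] K2 by simp
      have b: "c (u_vec C K l) = 0" if "l \<in> {1..<K}" for l
      proof -
        have "c (u_vec C K l) * (1 + 1 / (real K - 1)) = 0" using ev[of l] that a by simp
        moreover have "1 + 1 / (real K - 1) \<noteq> 0" using Kpos by (simp add: field_simps)
        ultimately show ?thesis by simp
      qed
      then have "S = 0" unfolding S_def by simp
      with a have "c ones_vec = 0" by simp
      with b c(1) show False by auto
    qed
    then show ?thesis by simp
  qed
  show ?thesis using R1 c1 part3 indep card
    by (simp add: matrix_vector_mul_assoc[symmetric])
qed

end
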